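(* Let $\phi\in C^4(\mathbb{R})$ be a profile function of a graph-like backward self-similar solution to the planar surface diffusion flow, i.e. $$\frac{\phi(x_1) - x_1\phi'(x_1)}{4\,v(x_1)} = \frac{1}{v}\frac{d}{dx_1}\Big(\frac{1}{v}\frac{dk}{dx_1}\Big)\quad\text{on }\mathbb{R},\qquad v=\sqrt{1+(\phi')^2},\ k=\phi''/v^3.$$ Define $$D_0[\phi](x_1) := \phi(x_1)^2 + x_1^2 - \Big(\int_0^{x_1}\sqrt{1+\phi'(z)^2}\,dz + |\phi(0)|\Big)^2.$$ If $\phi$ is not linear, then $\liminf_{x_1\to+\infty} D_0[\phi](x_1) = -\infty$ or $\liminf_{x_1\to-\infty} D_0[\phi](x_1) = -\infty$.
   Context: The displayed equation is the backward profile equation $\frac{x\cdot\mathbf{n}}{4}=\partial_s^2 k$ for the graph $\Gamma_*=\{(x_1,\phi(x_1))\}$, with upward unit normal $\mathbf{n}=(-\phi',1)/v$, curvature $k$ and arc-length derivative $\partial_s=v^{-1}\partial_{x_1}$. "Linear" means $\phi(x_1)=cx_1+c'$ for constants $c,c'$. *)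

theory Defs
  imports "HOL-Analysis.Analysis" "HOL-Library.Extended_Real" "HOL-Library.Liminf_Limsup"
begin

definition C4 :: "(real \<Rightarrow> real) \<Rightarrow> bool" where
  "C4 f \<longleftrightarrow> (\<forall>j<4. \<forall>x. ((deriv ^^ j) f) differentiable (at x))
              \<and> continuous_on UNIV ((deriv ^^ 4) f)"

definition vfun :: "(real \<Rightarrow> real) \<Rightarrow> real \<Rightarrow> real" where
  "vfun phi x = sqrt (1 + (deriv phi x)\<^sup>2)"

definition curv :: "(real \<Rightarrow> real) \<Rightarrow> real \<Rightarrow> real" where
  "curv phi x = deriv (deriv phi) x / (vfun phi x) ^ 3"

definition backward_profile :: "(real \<Rightarrow> real) \<Rightarrow> bool" where
  "backward_profile phi \<longleftrightarrow>
     (\<forall>x. (phi x - x * deriv phi x) / (4 * vfun phi x)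
        = (1 / vfun phi x) * deriv (\<lambda>y. (1 / vfun phi y) * deriv (curv phi) y) x)"

definition oint0 :: "(real \<Rightarrow> real) \<Rightarrow> real \<Rightarrow> real" where
  "oint0 f x = (if 0 \<le> x then integral {0..x} f else - integral {x..0} f)"

definition D0 :: "(real \<Rightarrow> real) \<Rightarrow> real \<Rightarrow> real" where
  "D0 phi x = (phi x)\<^sup>2 + x\<^sup>2 - (oint0 (\<lambda>z. sqrt (1 + (deriv phi z)\<^sup>2)) x + \<bar>phi 0\<bar>)\<^sup>2"

definition is_linear_fun :: "(real \<Rightarrow> real) \<Rightarrow> bool" where
  "is_linear_fun phi \<longleftrightarrow> (\<exists>c c'. \<forall>x. phi x = c * x + c')"

end

theory Submission
  imports Defs
begin

lemma gen_A1:
  fixes f L :: "real \<Rightarrow> real"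
  assumes H: "\<And>a b. 0 \<le> a \<Longrightarrow> a \<le> b \<Longrightarrow> cmod (Complex (b-a) (f b - f a)) \<le> L b - L a"
    and L0: "L 0 = 0"
    and x0: "0 \<le> x0" and lt: "cmod (Complex x0 (f x0)) < L x0 + \<bar>f 0\<bar>"
  shows "\<exists>N. \<forall>x\<ge>N. (f x)\<^sup>2 + x\<^sup>2 - (L x + \<bar>f 0\<bar>)\<^sup>2 < r"
proof -
  define c where "c = \<bar>f 0\<bar>"
  define e where "e = L x0 + c - cmod (Complex x0 (f x0))"
  have e: "e > 0" using lt by (simp add: e_def c_def)
  have c0: "c \<ge> 0" by (simp add: c_def)
  have bound: "(f x)\<^sup>2 + x\<^sup>2 - (L x + c)\<^sup>2 \<le> - e * (2*x - e)" if x: "x \<ge> x0" for x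
  proof -
    have "cmod (Complex x (f x)) \<le> cmod (Complex x0 (f x0)) + cmod (Complex (x-x0) (f x - f x0))"
    proof -
      have "Complex x (f x) = Complex x0 (f x0) + Complex (x-x0) (f x - f x0)" by (simp add: complex_eq_iff)
      then show ?thesis by (metis norm_triangle_ineq)
    qed
    also have "\<dots> \<le> cmod (Complex x0 (f x0)) + (L x - L x0)" using H[OF x0 x] by simp
    finally have n: "cmod (Complex x (f x)) \<le> L x + c - e" by (simp add: e_def)
    have Lx: "L x \<ge> x"
    proof -
      have "cmod (Complex x (f x - f 0)) \<le> L x" using H[of 0 x] x x0 L0 by simp
      moreover have "\<bar>x\<bar> \<le> cmod (Complex x (f x - f 0))" using abs_Re_le_cmod[of "Complex x (f x - f 0)"] by simp
      ultimately show ?thesis by simp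
    qed
    have sq: "cmod (Complex x (f x))^2 = (f x)\<^sup>2 + x\<^sup>2" by (simp add: cmod_def)
    have "cmod (Complex x (f x))^2 \<le> (L x + c - e)^2"
      using n by (intro power_mono) auto
    hence "(f x)\<^sup>2 + x\<^sup>2 - (L x + c)\<^sup>2 \<le> (L x + c - e)^2 - (L x + c)^2" using sq by simp
    also have "\<dots> = - e * (2*(L x + c) - e)" by (simp add: power2_eq_square algebra_simps)
    also have "\<dots> \<le> - e * (2*x - e)" using e Lx c0 by (intro mult_left_mono_neg) auto
    finally show ?thesis .
  qed
  define q where "q = r/e"
  define N where "N = max x0 ((e - q)/2 + 1)"
  have "(f x)\<^sup>2 + x\<^sup>2 - (L x + \<bar>f 0\<bar>)\<^sup>2 < r" if "x \<ge> N" for x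
  proof -
    have x: "x \<ge> x0" "x \<ge> (e - q)/2 + 1" using that by (auto simp: N_def)
    have "2*x \<ge> e - q + 2" using x(2) by (simp add: field_simps)
    hence "2*x - e > -q" by linarith
    hence "e * (2*x - e) > e * (-q)" using e by (intro mult_strict_left_mono) auto
    hence "- e * (2*x - e) < r" using e by (simp add: q_def)
    with bound[OF x(1)] show ?thesis by (simp add: c_def)
  qed
  thus ?thesis by blast
qed

lemma gen_A2:
  fixes f L :: "real \<Rightarrow> real"
  assumes H: "\<And>a b. 0 \<le> a \<Longrightarrow> a \<le> b \<Longrightarrow> cmod (Complex (b-a) (f b - f a)) \<le> L b - L a"
    and L0: "L 0 = 0"
    and ge: "\<And>x. 0 \<le> x \<Longrightarrow> cmod (Complex x (f x)) \<ge> L x + \<bar>f 0\<bar>"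
  shows "f 0 = 0 \<and> (\<forall>x\<ge>0. f x = f 1 * x)"
proof -
  have f0: "f 0 = 0"
  proof (rule ccontr)
    assume B: "f 0 \<noteq> 0"
    define A where "A = f 1" define B where "B = f 0"
    define s where "s = sqrt (1 + (A - B)\<^sup>2)"
    have "cmod (Complex 1 (f 1 - f 0)) \<le> L 1" using H[of 0 1] L0 by simp
    with ge[of 1] have "sqrt (1 + A\<^sup>2) \<ge> s + \<bar>B\<bar>" by (simp add: cmod_def A_def B_def s_def)
    hence "(sqrt (1 + A\<^sup>2))^2 \<ge> (s + \<bar>B\<bar>)^2"
      by (intro power_mono) (auto simp: s_def)
    hence "1 + A\<^sup>2 \<ge> s^2 + 2 * s * \<bar>B\<bar> + B\<^sup>2" by (simp add: power2_eq_square algebra_simps)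
    moreover have s2: "s^2 = 1 + (A-B)\<^sup>2" by (simp add: s_def)
    ultimately have i1: "B*(A-B) \<ge> s * \<bar>B\<bar>" by (simp add: power2_eq_square algebra_simps)
    have "s > \<bar>A - B\<bar>" unfolding s_def by (rule real_less_rsqrt) simp
    hence "s * \<bar>B\<bar> > \<bar>A-B\<bar> * \<bar>B\<bar>" using B by (simp add: B_def)
    moreover have "B*(A-B) \<le> \<bar>A-B\<bar> * \<bar>B\<bar>" by (metis abs_ge_self abs_mult mult.commute)
    ultimately show False using i1 by simp
  qed
  have key: "f a * x = f x * a" if a: "0 < a" "a \<le> x" for a x
  proof -
    define u where "u = Complex a (f a)"
    define w where "w = Complex (x-a) (f x - f a)"
    have uw: "u + w = Complex x (f x)" by (simp add: u_def w_def complex_eq_iff)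
    have La: "cmod u \<le> L a" using H[of 0 a] a L0 f0 by (simp add: u_def)
    have "L x - L a \<ge> cmod w" using H[of a x] a by (simp add: w_def)
    with La ge[of x] a f0 have "norm (u+w) \<ge> norm u + norm w" by (simp add: uw)
    moreover have "norm (u+w) \<le> norm u + norm w" by (rule norm_triangle_ineq)
    ultimately have "norm (u+w) = norm u + norm w" by simp
    hence e: "norm u *\<^sub>R w = norm w *\<^sub>R u" by (simp add: norm_triangle_eq)
    hence "norm u *\<^sub>R (u + w) = (norm u + norm w) *\<^sub>R u" by (simp add: scaleR_add_right scaleR_add_left)
    hence "norm u *\<^sub>R Complex x (f x) = norm (Complex x (f x)) *\<^sub>R u" using \<open>norm (u+w) = _\<close> uw by simp
    hence re: "norm u * x = norm (Complex x (f x)) * a" and im: "norm u * f x = norm (Complex x (f x)) * f a"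
      by (simp_all add: u_def complex_eq_iff)
    have pos: "norm (Complex x (f x)) > 0" using a by (auto simp: complex_eq_iff)
    have "norm (Complex x (f x)) * (f a * x) = norm (Complex x (f x)) * (f x * a)"
      using re im by (metis mult.assoc mult.commute)
    thus ?thesis using pos by simp
  qed
  have "f x = f 1 * x" if "x \<ge> 0" for x
  proof (cases "x = 0")
    case True then show ?thesis using f0 by simp
  next
    case False
    show ?thesis
    proof (cases "x \<le> 1")
      case True then show ?thesis using key[of x 1] False that by simp
    next
      case False then show ?thesis using key[of 1 x] by simp
    qed
  qed
  with f0 show ?thesis by blast
qed
lemma length_ineq:
  fixes f f' :: "real \<Rightarrow> real"
  assumes D: "\<And>x. (f has_real_derivative f' x) (at x)"
    and c: "continuous_on UNIV f'" and ab: "a \<le> b"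
  shows "cmod (Complex (b-a) (f b - f a)) \<le> integral {a..b} (\<lambda>x. sqrt (1 + (f' x)\<^sup>2))"
proof -
  define v where "v = (\<lambda>x. sqrt (1 + (f' x)\<^sup>2))"
  have vc: "continuous_on {a..b} v" unfolding v_def
    by (intro continuous_intros continuous_on_subset[OF c]) auto
  have vi: "(v has_integral integral {a..b} v) {a..b}"
    using integrable_continuous_interval[OF vc] by (rule integrable_integral)
  have fi: "(f' has_integral (f b - f a)) {a..b}"
    using ab by (intro fundamental_theorem_of_calculus)
      (auto simp: has_real_derivative_iff_has_vector_derivative[symmetric] intro: has_field_derivative_at_within D)
  define n where "n = cmod (Complex (b-a) (f b - f a))"
  have n2: "n^2 = (b-a)\<^sup>2 + (f b - f a)\<^sup>2" by (simp add: n_def cmod_def)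
  show ?thesis
  proof (cases "n = 0")
    case True
    have "0 \<le> integral {a..b} v" using vi by (intro has_integral_nonneg[OF vi]) (auto simp: v_def)
    thus ?thesis using True by (simp add: n_def v_def)
  next
    case False
    hence npos: "n > 0" by (simp add: n_def)
    define e1 where "e1 = (b-a)/n" define e2 where "e2 = (f b - f a)/n"
    have "e1\<^sup>2 + e2\<^sup>2 = n\<^sup>2/n\<^sup>2"
      unfolding e1_def e2_def power_divide n2 by (rule add_divide_distrib[symmetric])
    hence e12: "e1\<^sup>2 + e2\<^sup>2 = 1" using npos by simp
    have "e1*(b-a) + e2*(f b - f a) = ((b-a)\<^sup>2 + (f b - f a)\<^sup>2)/n"
      by (simp add: e1_def e2_def power2_eq_square add_divide_distrib)
    also have "\<dots> = n\<^sup>2/n" by (simp only: n2)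
    also have "\<dots> = n" using npos by (simp add: power2_eq_square)
    finally have nn: "n = e1*(b-a) + e2*(f b - f a)" by simp
    have gi: "((\<lambda>x. e1 + e2 * f' x) has_integral (e1*(b-a) + e2*(f b - f a))) {a..b}"
    proof -
      have "((\<lambda>x. e1) has_integral e1*(b-a)) {a..b}" using has_integral_const_real[of e1 a b] ab by (simp add: mult.commute)
      moreover have "((\<lambda>x. e2 * f' x) has_integral e2*(f b - f a)) {a..b}" by (rule has_integral_mult_right[OF fi])
      ultimately show ?thesis by (rule has_integral_add)
    qed
    have pt: "e1 + e2 * t \<le> sqrt (1 + t\<^sup>2)" for t
    proof (rule real_le_rsqrt)
      have "(1 + t\<^sup>2) - (e1 + e2*t)\<^sup>2 = (e1\<^sup>2 + e2\<^sup>2)*(1 + t\<^sup>2) - (e1 + e2*t)\<^sup>2" using e12 by simp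
      also have "\<dots> = (e1*t - e2)\<^sup>2" by (simp add: power2_eq_square algebra_simps)
      finally show "(e1 + e2*t)\<^sup>2 \<le> 1 + t\<^sup>2" by (metis diff_ge_0_iff_ge zero_le_power2)
    qed
    have "e1*(b-a) + e2*(f b - f a) \<le> integral {a..b} v"
      by (rule has_integral_le[OF gi vi]) (simp add: v_def pt)
    thus ?thesis using nn by (simp add: n_def v_def)
  qed
qed

lemma liminf_top:
  fixes g :: "real \<Rightarrow> real"
  assumes "\<And>r. \<exists>N. \<forall>x\<ge>N. g x < r"
  shows "Liminf at_top (\<lambda>x. ereal (g x)) = -\<infinity>"
proof (rule lim_imp_Liminf)
  show "((\<lambda>x. ereal (g x)) \<longlongrightarrow> -\<infinity>) at_top"
    unfolding tendsto_MInfty eventually_at_top_linorder using assms by simp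
qed simp

lemma liminf_bot:
  fixes g :: "real \<Rightarrow> real"
  assumes "\<And>r. \<exists>N. \<forall>x\<ge>N. g (-x) < r"
  shows "Liminf at_bot (\<lambda>x. ereal (g x)) = -\<infinity>"
proof (rule lim_imp_Liminf)
  show "((\<lambda>x. ereal (g x)) \<longlongrightarrow> -\<infinity>) at_bot"
    unfolding tendsto_MInfty eventually_at_bot_linorder
  proof
    fix r
    obtain N where N: "\<forall>x\<ge>N. g (-x) < r" using assms by blast
    have "\<forall>x\<le>-N. g x < r"
    proof (intro allI impI)
      fix x :: real assume "x \<le> -N"
      hence "-x \<ge> N" by simp
      with N have "g (-(-x)) < r" by blast
      thus "g x < r" by simp
    qed
    thus "\<exists>N. \<forall>x\<le>N. ereal (g x) < ereal r" by auto
  qed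
qed simp

theorem mainTheorem9:
  fixes phi :: "real \<Rightarrow> real"
  assumes "C4 phi"
    and "backward_profile phi"
    and "\<not> is_linear_fun phi"
  shows "Liminf at_top (\<lambda>x. ereal (D0 phi x)) = -\<infinity>
       \<or> Liminf at_bot (\<lambda>x. ereal (D0 phi x)) = -\<infinity>"
proof (rule ccontr)
  assume nc: "\<not> ?thesis"
  hence top: "Liminf at_top (\<lambda>x. ereal (D0 phi x)) \<noteq> -\<infinity>"
    and bot: "Liminf at_bot (\<lambda>x. ereal (D0 phi x)) \<noteq> -\<infinity>" by auto
  have c4: "\<And>j x. j < 4 \<Longrightarrow> ((deriv ^^ j) phi) differentiable (at x)"
    using assms(1) unfolding C4_def by blast
  have d0: "\<And>x. phi differentiable at x" using c4[of 0] by simp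
  have d1: "\<And>x. deriv phi differentiable at x" using c4[of 1] by simp
  have D: "\<And>x. (phi has_real_derivative deriv phi x) (at x)"
    using d0 DERIV_deriv_iff_real_differentiable by blast
  have cd: "continuous_on UNIV (deriv phi)"
    by (intro continuous_at_imp_continuous_on ballI differentiable_imp_continuous_within d1)
  define v where "v = (\<lambda>z. sqrt (1 + (deriv phi z)\<^sup>2))"
  have vc: "continuous_on UNIV v" unfolding v_def by (intro continuous_intros cd)
  have vint: "\<And>a b. v integrable_on {a..b}"
    by (rule integrable_continuous_interval, rule continuous_on_subset[OF vc]) auto
  have LEN: "\<And>a b. a \<le> b \<Longrightarrow> cmod (Complex (b-a) (phi b - phi a)) \<le> integral {a..b} v"
    unfolding v_def by (rule length_ineq[OF D cd])
  define L where "L = oint0 v"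
  have Lpos: "\<And>x. 0 \<le> x \<Longrightarrow> L x = integral {0..x} v" by (simp add: L_def oint0_def)
  have L0: "L 0 = 0" by (simp add: Lpos)
  have H1: "cmod (Complex (b-a) (phi b - phi a)) \<le> L b - L a" if "0 \<le> a" "a \<le> b" for a b
  proof -
    have "integral {0..a} v + integral {a..b} v = integral {0..b} v"
      using that Henstock_Kurzweil_Integration.integral_combine[where a=0 and c=a and b=b and f=v, OF _ _ vint] by auto
    thus ?thesis using LEN[OF that(2)] that by (simp add: Lpos)
  qed
  have D0eq: "\<And>x. D0 phi x = (phi x)\<^sup>2 + x\<^sup>2 - (L x + \<bar>phi 0\<bar>)\<^sup>2"
    by (simp add: D0_def L_def v_def)
  have ge1: "cmod (Complex x (phi x)) \<ge> L x + \<bar>phi 0\<bar>" if x: "0 \<le> x" for x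
  proof (rule ccontr)
    assume "\<not> ?thesis"
    hence "cmod (Complex x (phi x)) < L x + \<bar>phi 0\<bar>" by simp
    from gen_A1[of phi L, OF H1 L0 x this]
    have "\<And>r. \<exists>N. \<forall>x\<ge>N. D0 phi x < r" by (simp add: D0eq)
    hence "Liminf at_top (\<lambda>x. ereal (D0 phi x)) = -\<infinity>" by (rule liminf_top)
    with top show False by simp
  qed
  from gen_A2[of phi L, OF H1 L0 ge1]
  have p0: "phi 0 = 0" and ppos: "\<And>x. 0 \<le> x \<Longrightarrow> phi x = phi 1 * x" by blast+
  define psi where "psi = (\<lambda>x. phi (-x))"
  define M where "M = (\<lambda>x. integral {-x..0} v)"
  have M0: "M 0 = 0" by (simp add: M_def)
  have H2: "cmod (Complex (b-a) (psi b - psi a)) \<le> M b - M a" if "0 \<le> a" "a \<le> b" for a b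
  proof -
    have "integral {-b..-a} v + integral {-a..0} v = integral {-b..0} v"
      using that Henstock_Kurzweil_Integration.integral_combine[where a="-b" and c="-a" and b=0 and f=v, OF _ _ vint] by auto
    moreover have "cmod (Complex (-a - -b) (phi (-a) - phi (-b))) \<le> integral {-b..-a} v"
      using that by (intro LEN) auto
    moreover have "cmod (Complex (-a - -b) (phi (-a) - phi (-b))) = cmod (Complex (b-a) (psi b - psi a))"
      by (simp add: cmod_def psi_def power2_commute)
    ultimately show ?thesis by (simp add: M_def)
  qed
  have D0eq2: "D0 phi (-x) = (psi x)\<^sup>2 + x\<^sup>2 - (M x + \<bar>psi 0\<bar>)\<^sup>2" if "0 \<le> x" for x
  proof (cases "x = 0")
    case True then show ?thesis by (simp add: D0_def oint0_def psi_def M_def p0)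
  next
    case False
    hence "oint0 v (-x) = - M x" using that by (simp add: oint0_def M_def)
    then show ?thesis by (simp add: D0_def psi_def p0 v_def[symmetric] power2_commute)
  qed
  have ge2: "cmod (Complex x (psi x)) \<ge> M x + \<bar>psi 0\<bar>" if x: "0 \<le> x" for x
  proof (rule ccontr)
    assume "\<not> ?thesis"
    hence "cmod (Complex x (psi x)) < M x + \<bar>psi 0\<bar>" by simp
    from gen_A1[of psi M, OF H2 M0 x this]
    have ex: "\<And>r. \<exists>N. \<forall>x\<ge>N. (psi x)\<^sup>2 + x\<^sup>2 - (M x + \<bar>psi 0\<bar>)\<^sup>2 < r" .
    have "\<exists>N. \<forall>x\<ge>N. D0 phi (-x) < r" for r
    proof -
      obtain N where N: "\<forall>x\<ge>N. (psi x)\<^sup>2 + x\<^sup>2 - (M x + \<bar>psi 0\<bar>)\<^sup>2 < r" using ex by blast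
      have "\<forall>x\<ge>max N 0. D0 phi (-x) < r" using N D0eq2 by auto
      thus ?thesis by blast
    qed
    hence "Liminf at_bot (\<lambda>x. ereal (D0 phi x)) = -\<infinity>" by (rule liminf_bot)
    with bot show False by simp
  qed
  from gen_A2[of psi M, OF H2 M0 ge2]
  have pneg: "\<And>x. 0 \<le> x \<Longrightarrow> phi (-x) = phi (-1) * x" unfolding psi_def by blast
  have lim: "((\<lambda>h. (phi (0 + h) - phi 0) / h) \<longlongrightarrow> deriv phi 0) (at 0)"
    using D[of 0] by (simp add: DERIV_def)
  have r: "((\<lambda>h. (phi (0 + h) - phi 0) / h) \<longlongrightarrow> phi 1) (at_right 0)"
  proof (rule tendsto_eventually)
    show "\<forall>\<^sub>F h in at_right 0. (phi (0 + h) - phi 0) / h = phi 1"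
      using eventually_at_right_less[of "0::real"]
      proof eventually_elim
        case (elim h) then show ?case using ppos[of h] p0 by simp
      qed
  qed
  have l: "((\<lambda>h. (phi (0 + h) - phi 0) / h) \<longlongrightarrow> - phi (-1)) (at_left 0)"
  proof (rule tendsto_eventually)
    have ev: "\<forall>\<^sub>F h in at_left (0::real). h < 0" by (simp add: eventually_at_filter)
    show "\<forall>\<^sub>F h in at_left 0. (phi (0 + h) - phi 0) / h = - phi (-1)"
      using ev
    proof eventually_elim
      case (elim h)
      have "phi h = phi (-(-h))" by simp
      also have "\<dots> = phi (-1) * (-h)" using elim by (intro pneg) simp
      finally show ?case using elim p0 by simp
    qed
  qed
  have "deriv phi 0 = phi 1"
    using tendsto_unique[OF _ tendsto_mono[OF at_le[of "{0<..}" UNIV] lim] r] by simp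
  moreover have "deriv phi 0 = - phi (-1)"
    using tendsto_unique[OF _ tendsto_mono[OF at_le[of "{..<0}" UNIV] lim] l] by simp
  ultimately have eq: "phi (-1) = - phi 1" by simp
  have "\<forall>x. phi x = phi 1 * x + 0"
  proof
    fix x :: real
    show "phi x = phi 1 * x + 0"
    proof (cases "x \<ge> 0")
      case True then show ?thesis using ppos[of x] by simp
    next
      case False
      have "phi x = phi (-(-x))" by simp
      also have "\<dots> = phi (-1) * (-x)" using False by (intro pneg) simp
      finally show ?thesis using eq by simp
    qed
  qed
  hence "is_linear_fun phi" unfolding is_linear_fun_def by blast
  with assms(3) show False by simp
qed

end
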